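(* Let $\boldsymbol{\phi}\in\mathcal{D}_{\boldsymbol{\phi}}(\boldsymbol{r})$ be such that $t_i(a,k)>0$ for all $i\in\mathcal{V}$ and $(a,k)\in\mathcal{S}$, and suppose $\boldsymbol{\phi}$ satisfies, for all $i\in\mathcal{V}$, $j\in\{0\}\cup\mathcal{V}$, $(a,k)\in\mathcal{S}$, $$\frac{\partial T}{\partial \phi_{ij}(a,k)} \begin{cases} = \min_{j'\in\{0\}\cup\mathcal{V}} \frac{\partial T}{\partial \phi_{ij'}(a,k)}, & \text{if } \phi_{ij}(a,k)>0,\\ \geq \min_{j'\in\{0\}\cup\mathcal{V}} \frac{\partial T}{\partial \phi_{ij'}(a,k)}, & \text{if } \phi_{ij}(a,k)=0.\end{cases}$$ Then $\boldsymbol{\phi}$ is a global optimal solution of $\min_{\boldsymbol{\phi}\in\mathcal{D}_{\boldsymbol{\phi}}(\boldsymbol{r})}T(\boldsymbol{\phi})$.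
   Context: Service-chain computing network model. $\mathcal{G}=(\mathcal{V},\mathcal{E})$ is a directed, strongly connected graph whose links are bidirectional ($(i,j)\in\mathcal{E}\Rightarrow(j,i)\in\mathcal{E}$). $\mathcal{A}$ is a finite set of applications; application $a$ has a destination $d_a\in\mathcal{V}$ and a chain of $|\mathcal{T}_a|$ tasks performed in order. The set of stages is $\mathcal{S}=\{(a,k): a\in\mathcal{A}, k=0,1,\dots,|\mathcal{T}_a|\}$; stage $(a,k)$ denotes packets that have completed the first $k$ tasks of $a$, and has packet size $L_{(a,k)}>0$. Exogenous input rates are $r_i(a)\ge 0$ (stage $(a,0)$ packets injected at node $i$), $\boldsymbol{r}=[r_i(a)]$. The forwarding strategy $\boldsymbol{\phi}=[\phi_{ij}(a,k)]_{(a,k)\in\mathcal{S},i\in\mathcal{V},j\in\{0\}\cup\mathcal{V}}$ has $\phi_{ij}(a,k)\in[0,1]$; for $j\in\mathcal{V}$ it is the fraction of node $i$'s stage-$(a,k)$ traffic sent to node $j$ (with $\phi_{ij}(a,k)=0$ if $(i,j)\notin\mathcal{E}$), and $\phi_{i0}(a,k)$ is the fraction sent to $i$'s local processor, which converts each stage-$(a,k)$ packet into one stage-$(a,k+1)$ packet; $\phi_{i0}(a,|\mathcal{T}_a|)=0$. Flow conservation: $\sum_{j\in\{0\}\cup\mathcal{V}}\phi_{ij}(a,k)=0$ if $k=|\mathcal{T}_a|$ and $i=d_a$, and $=1$ otherwise. Traffic $t_i(a,k)$ satisfies $t_i(a,0)=\sum_{j\in\mathcal{V}}t_j(a,0)\phi_{ji}(a,0)+r_i(a)$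 and, for $k\ge1$, $t_i(a,k)=\sum_{j\in\mathcal{V}}t_j(a,k)\phi_{ji}(a,k)+t_i(a,k-1)\phi_{i0}(a,k-1)$. Link flows $f_{ij}(a,k)=t_i(a,k)\phi_{ij}(a,k)$, processor inputs $g_i(a,k)=t_i(a,k)\phi_{i0}(a,k)$, total link flow $F_{ij}=\sum_{(a,k)\in\mathcal{S}}L_{(a,k)}f_{ij}(a,k)$, computation workload $G_i=\sum_{(a,k)\in\mathcal{S}}w_i(a,k)g_i(a,k)$ with weights $w_i(a,k)>0$. Link costs $D_{ij}(\cdot)$ and computation costs $C_i(\cdot)$ are increasing, continuously differentiable, convex functions (possibly taking value $+\infty$ outside a domain). Total cost $T(\boldsymbol{\phi})=\sum_{(i,j)\in\mathcal{E}}D_{ij}(F_{ij})+\sum_{i\in\mathcal{V}}C_i(G_i)$. The feasible set $\mathcal{D}_{\boldsymbol{\phi}}(\boldsymbol{r})$ consists of $\boldsymbol{\phi}$ satisfying flow conservation with all $D_{ij}(F_{ij})<\infty$ and $C_i(G_i)<\infty$. Marginal quantities: $\partial T/\partial t_i(a,k)$ is the marginal total cost of an additional exogenous injection of stage-$(a,k)$ traffic at node $i$ (with $\boldsymbol{\phi}$ fixed); it satisfies $\partial T/\partial t_{d_a}(a,|\mathcal{T}_a|)=0$, for $k=|\mathcal{T}_a|$: $\frac{\partial T}{\partial t_i(a,k)}=\sum_{j\in\mathcal{V}}\phi_{ij}(a,k)\big(L_{(a,k)}D'_{ij}(F_{ij})+\frac{\partial T}{\partial t_j(a,k)}\big)$,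 and for $k<|\mathcal{T}_a|$: $\frac{\partial T}{\partial t_i(a,k)}=\phi_{i0}(a,k)\big(w_i(a,k)C'_i(G_i)+\frac{\partial T}{\partial t_i(a,k+1)}\big)+\sum_{j\in\mathcal{V}}\phi_{ij}(a,k)\big(L_{(a,k)}D'_{ij}(F_{ij})+\frac{\partial T}{\partial t_j(a,k)}\big)$. The partial derivatives of $T$ are $\frac{\partial T}{\partial\phi_{ij}(a,k)}=t_i(a,k)\big(L_{(a,k)}D'_{ij}(F_{ij})+\frac{\partial T}{\partial t_j(a,k)}\big)$ for $(i,j)\in\mathcal{E}$, $\frac{\partial T}{\partial\phi_{i0}(a,k)}=t_i(a,k)\big(w_i(a,k)C'_i(G_i)+\frac{\partial T}{\partial t_i(a,k+1)}\big)$ for $k<|\mathcal{T}_a|$, and by convention $\partial T/\partial\phi_{ij}(a,k)=\infty$ for $(i,j)\notin\mathcal{E}$ and $\partial T/\partial\phi_{i0}(a,|\mathcal{T}_a|)=\infty$. *)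

theory Defs
  imports "HOL-Analysis.Analysis"
begin

text \<open>
  Nodes: elements of a finite type 'v (the node set V is UNIV).
  Applications: elements of a finite type 'a (the application set A is UNIV).
  nT a = |T_a| (number of tasks), dest a = d_a.
  Stages (a,k) with k \<le> nT a.
  Forwarding strategy: phi a k i j with j :: 'v option;
  j = None is the local processor "0", j = Some j' is node j'.
  Traffic t a k i = t_i(a,k); exogenous rates r i a = r_i(a).
  Link costs: D i j (real-valued on the domain Ddom i j, +\<infinity> outside),
  with derivative D' i j; similarly C i, Cdom i, C' i.
\<close>

text \<open>Monotonicity of the extended-valued
  function forces S to be downward closed.\<close>
definition cost_fun :: "real set \<Rightarrow> (real \<Rightarrow> real) \<Rightarrow> (real \<Rightarrow> real) \<Rightarrow> bool" where
  "cost_fun S f f' \<longleftrightarrow>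
     (\<forall>x\<in>S. \<forall>y. y \<le> x \<longrightarrow> y \<in> S) \<and>
     convex_on S f \<and> mono_on S f \<and>
     (\<forall>x\<in>S. (f has_real_derivative f' x) (at x within S)) \<and>
     continuous_on S f'"

definition valid_phi ::
  "('v \<times> 'v) set \<Rightarrow> ('a \<Rightarrow> nat) \<Rightarrow> ('a \<Rightarrow> 'v) \<Rightarrow>
   ('a \<Rightarrow> nat \<Rightarrow> 'v \<Rightarrow> 'v option \<Rightarrow> real) \<Rightarrow> bool" where
  "valid_phi E nT dest phi \<longleftrightarrow>
     (\<forall>a k i j. k \<le> nT a \<longrightarrow> 0 \<le> phi a k i j \<and> phi a k i j \<le> 1) \<and>
     (\<forall>a k i j. k \<le> nT a \<longrightarrow> (i, j) \<notin> E \<longrightarrow> phi a k i (Some j) = 0) \<and>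
     (\<forall>a i. phi a (nT a) i None = 0) \<and>
     (\<forall>a k i. k \<le> nT a \<longrightarrow>
        (\<Sum>j\<in>UNIV. phi a k i j) = (if k = nT a \<and> i = dest a then 0 else 1))"

definition is_traffic ::
  "('a \<Rightarrow> nat) \<Rightarrow> ('v::finite \<Rightarrow> 'a \<Rightarrow> real) \<Rightarrow>
   ('a \<Rightarrow> nat \<Rightarrow> 'v \<Rightarrow> 'v option \<Rightarrow> real) \<Rightarrow> ('a \<Rightarrow> nat \<Rightarrow> 'v \<Rightarrow> real) \<Rightarrow> bool" where
  "is_traffic nT r phi t \<longleftrightarrow>
     (\<forall>a k i. k \<le> nT a \<longrightarrow>
        t a k i = (\<Sum>j\<in>UNIV. t a k j * phi a k j (Some i)) +
                  (if k = 0 then r i a else t a (k - 1) i * phi a (k - 1) i None))"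

definition traffic_unique ::
  "('a \<Rightarrow> nat) \<Rightarrow> ('v::finite \<Rightarrow> 'a \<Rightarrow> real) \<Rightarrow>
   ('a \<Rightarrow> nat \<Rightarrow> 'v \<Rightarrow> 'v option \<Rightarrow> real) \<Rightarrow> bool" where
  "traffic_unique nT r phi \<longleftrightarrow>
     (\<exists>t. is_traffic nT r phi t) \<and>
     (\<forall>t t'. is_traffic nT r phi t \<and> is_traffic nT r phi t' \<longrightarrow>
        (\<forall>a k i. k \<le> nT a \<longrightarrow> t a k i = t' a k i))"

definition traffic ::
  "('a \<Rightarrow> nat) \<Rightarrow> ('v::finite \<Rightarrow> 'a \<Rightarrow> real) \<Rightarrow>
   ('a \<Rightarrow> nat \<Rightarrow> 'v \<Rightarrow> 'v option \<Rightarrow> real) \<Rightarrow> ('a \<Rightarrow> nat \<Rightarrow> 'v \<Rightarrow> real)" where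
  "traffic nT r phi = (SOME t. is_traffic nT r phi t)"

definition linkflow ::
  "('a::finite \<Rightarrow> nat) \<Rightarrow> ('a \<Rightarrow> nat \<Rightarrow> real) \<Rightarrow>
   ('a \<Rightarrow> nat \<Rightarrow> 'v \<Rightarrow> 'v option \<Rightarrow> real) \<Rightarrow> ('a \<Rightarrow> nat \<Rightarrow> 'v \<Rightarrow> real) \<Rightarrow>
   'v \<Rightarrow> 'v \<Rightarrow> real" where
  "linkflow nT L phi t i j =
     (\<Sum>a\<in>UNIV. \<Sum>k\<le>nT a. L a k * (t a k i * phi a k i (Some j)))"

definition workload ::
  "('a::finite \<Rightarrow> nat) \<Rightarrow> ('v \<Rightarrow> 'a \<Rightarrow> nat \<Rightarrow> real) \<Rightarrow>
   ('a \<Rightarrow> nat \<Rightarrow> 'v \<Rightarrow> 'v option \<Rightarrow> real) \<Rightarrow> ('a \<Rightarrow> nat \<Rightarrow> 'v \<Rightarrow> real) \<Rightarrow>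
   'v \<Rightarrow> real" where
  "workload nT w phi t i =
     (\<Sum>a\<in>UNIV. \<Sum>k\<le>nT a. w i a k * (t a k i * phi a k i None))"

definition feasible ::
  "('v::finite \<times> 'v) set \<Rightarrow> ('a::finite \<Rightarrow> nat) \<Rightarrow> ('a \<Rightarrow> 'v) \<Rightarrow>
   ('a \<Rightarrow> nat \<Rightarrow> real) \<Rightarrow> ('v \<Rightarrow> 'a \<Rightarrow> nat \<Rightarrow> real) \<Rightarrow>
   ('v \<Rightarrow> 'v \<Rightarrow> real set) \<Rightarrow> ('v \<Rightarrow> real set) \<Rightarrow> ('v \<Rightarrow> 'a \<Rightarrow> real) \<Rightarrow>
   ('a \<Rightarrow> nat \<Rightarrow> 'v \<Rightarrow> 'v option \<Rightarrow> real) \<Rightarrow> bool" where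
  "feasible E nT dest L w Ddom Cdom r phi \<longleftrightarrow>
     valid_phi E nT dest phi \<and> traffic_unique nT r phi \<and>
     (\<forall>(i, j)\<in>E. linkflow nT L phi (traffic nT r phi) i j \<in> Ddom i j) \<and>
     (\<forall>i. workload nT w phi (traffic nT r phi) i \<in> Cdom i)"

definition total_cost ::
  "('v::finite \<times> 'v) set \<Rightarrow> ('a::finite \<Rightarrow> nat) \<Rightarrow>
   ('a \<Rightarrow> nat \<Rightarrow> real) \<Rightarrow> ('v \<Rightarrow> 'a \<Rightarrow> nat \<Rightarrow> real) \<Rightarrow>
   ('v \<Rightarrow> 'v \<Rightarrow> real \<Rightarrow> real) \<Rightarrow> ('v \<Rightarrow> real \<Rightarrow> real) \<Rightarrow> ('v \<Rightarrow> 'a \<Rightarrow> real) \<Rightarrow>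
   ('a \<Rightarrow> nat \<Rightarrow> 'v \<Rightarrow> 'v option \<Rightarrow> real) \<Rightarrow> real" where
  "total_cost E nT L w D C r phi =
     (\<Sum>(i, j)\<in>E. D i j (linkflow nT L phi (traffic nT r phi) i j)) +
     (\<Sum>i\<in>UNIV. C i (workload nT w phi (traffic nT r phi) i))"

text \<open>delta a k i stands for dT/dt_i(a,k): the marginal-cost recursion.\<close>
definition is_marginal ::
  "('a::finite \<Rightarrow> nat) \<Rightarrow> ('a \<Rightarrow> 'v::finite) \<Rightarrow>
   ('a \<Rightarrow> nat \<Rightarrow> real) \<Rightarrow> ('v \<Rightarrow> 'a \<Rightarrow> nat \<Rightarrow> real) \<Rightarrow>
   ('v \<Rightarrow> 'v \<Rightarrow> real \<Rightarrow> real) \<Rightarrow> ('v \<Rightarrow> real \<Rightarrow> real) \<Rightarrow>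
   ('a \<Rightarrow> nat \<Rightarrow> 'v \<Rightarrow> 'v option \<Rightarrow> real) \<Rightarrow> ('a \<Rightarrow> nat \<Rightarrow> 'v \<Rightarrow> real) \<Rightarrow>
   ('a \<Rightarrow> nat \<Rightarrow> 'v \<Rightarrow> real) \<Rightarrow> bool" where
  "is_marginal nT dest L w D' C' phi t delta \<longleftrightarrow>
     (\<forall>a. delta a (nT a) (dest a) = 0) \<and>
     (\<forall>a i. i \<noteq> dest a \<longrightarrow>
        delta a (nT a) i =
          (\<Sum>j\<in>UNIV. phi a (nT a) i (Some j) *
             (L a (nT a) * D' i j (linkflow nT L phi t i j) + delta a (nT a) j))) \<and>
     (\<forall>a k i. k < nT a \<longrightarrow>
        delta a k i =
          phi a k i None * (w i a k * C' i (workload nT w phi t i) + delta a (k + 1) i) +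
          (\<Sum>j\<in>UNIV. phi a k i (Some j) *
             (L a k * D' i j (linkflow nT L phi t i j) + delta a k j)))"

definition dT_dphi ::
  "('v::finite \<times> 'v) set \<Rightarrow> ('a::finite \<Rightarrow> nat) \<Rightarrow>
   ('a \<Rightarrow> nat \<Rightarrow> real) \<Rightarrow> ('v \<Rightarrow> 'a \<Rightarrow> nat \<Rightarrow> real) \<Rightarrow>
   ('v \<Rightarrow> 'v \<Rightarrow> real \<Rightarrow> real) \<Rightarrow> ('v \<Rightarrow> real \<Rightarrow> real) \<Rightarrow>
   ('a \<Rightarrow> nat \<Rightarrow> 'v \<Rightarrow> 'v option \<Rightarrow> real) \<Rightarrow> ('a \<Rightarrow> nat \<Rightarrow> 'v \<Rightarrow> real) \<Rightarrow>
   ('a \<Rightarrow> nat \<Rightarrow> 'v \<Rightarrow> real) \<Rightarrow> 'a \<Rightarrow> nat \<Rightarrow> 'v \<Rightarrow> 'v option \<Rightarrow> ereal" where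
  "dT_dphi E nT L w D' C' phi t delta a k i j =
     (case j of
        None \<Rightarrow>
          (if k < nT a
           then ereal (t a k i * (w i a k * C' i (workload nT w phi t i) + delta a (k + 1) i))
           else \<infinity>)
      | Some j' \<Rightarrow>
          (if (i, j') \<in> E
           then ereal (t a k i * (L a k * D' i j' (linkflow nT L phi t i j') + delta a k j'))
           else \<infinity>))"

end

theory Submission imports Defs begin

lemma tangent_dc:
  fixes f :: "real \<Rightarrow> real"
  assumes S: "\<forall>x\<in>S. \<forall>y. y \<le> x \<longrightarrow> y \<in> S" and cv: "convex_on S f"
    and c: "c \<in> S" and x: "x \<in> S"
    and d: "(f has_real_derivative f') (at c within S)"
  shows "f x \<ge> f c + f' * (x - c)"
proof (cases x c rule: linorder_cases)
  assume xc: "x > c"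
  have sub: "{..x} \<subseteq> S" using S x by auto
  have "f x - f c \<ge> f' * (x - c)"
  proof (rule convex_on_imp_above_tangent[of "{..x}"])
    show "convex_on {..x} f" using convex_on_subset[OF cv sub] by simp
    show "connected {..x}" by simp
    show "c \<in> interior {..x}" using xc by simp
    show "x \<in> {..x}" by simp
    show "(f has_real_derivative f') (at c within {..x})" using has_field_derivative_subset[OF d sub] .
  qed
  then show ?thesis by simp
next
  assume xc: "x < c"
  have sub: "{..<c} \<subseteq> S" using S c by auto
  have sub2: "{x..c} \<subseteq> S" using S c by auto
  have lim: "((\<lambda>y. (f y - f c) / (y - c)) \<longlongrightarrow> f') (at_left c)"
    using has_field_derivative_subset[OF d sub] unfolding has_field_derivative_iff .
  from eventually_at_left_real[OF xc]
  have ev: "eventually (\<lambda>y. (f y - f c) / (y - c) \<ge> (f x - f c) / (x - c)) (at_left c)"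
  proof eventually_elim
    fix y assume y: "y \<in> {x<..<c}"
    have "f y \<le> (f x - f c) / (c - x) * (c - y) + f c"
      using y xc by (intro convex_onD_Icc'' convex_on_subset[OF cv sub2]) auto
    hence "f y - f c \<le> (f x - f c) * ((c - y) / (c - x))" by simp
    also have "(c - y) / (c - x) = (y - c) / (x - c)" using y xc by (simp add: field_simps)
    finally show "(f y - f c) / (y - c) \<ge> (f x - f c) / (x - c)" using y xc
      by (simp add: field_split_simps)
  qed
  have "f' \<ge> (f x - f c) / (x - c)"
    using tendsto_lowerbound[OF lim ev] by simp
  thus ?thesis using xc by (simp add: field_simps)
qed simp

lemma nonneg_sol:
  fixes P :: "'i \<Rightarrow> 'i \<Rightarrow> real"
  assumes fin: "finite I" and Pnn: "\<forall>p\<in>I. \<forall>q\<in>I. 0 \<le> P p q"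
    and rows: "\<forall>p\<in>I. (\<Sum>q\<in>I. P p q) \<le> 1"
    and bnn: "\<forall>q\<in>I. 0 \<le> b q"
    and sol: "\<forall>q\<in>I. x q = (\<Sum>p\<in>I. x p * P p q) + b q"
    and uniq: "\<forall>y. (\<forall>q\<in>I. y q = (\<Sum>p\<in>I. y p * P p q) + b q) \<longrightarrow> (\<forall>q\<in>I. y q = x q)"
  shows "\<forall>q\<in>I. 0 \<le> x q"
proof (rule ccontr)
  define N where "N = {q\<in>I. x q < 0}"
  assume "\<not> (\<forall>q\<in>I. 0 \<le> x q)"
  then obtain q0 where q0: "q0 \<in> N" unfolding N_def by force
  have NI: "N \<subseteq> I" unfolding N_def by auto
  have finN: "finite N" using finite_subset[OF NI fin] .
  define s where "s p = x p * (\<Sum>q\<in>N. P p q) - (if p \<in> N then x p else 0)" for p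
  have rowN: "(\<Sum>q\<in>N. P p q) \<le> (\<Sum>q\<in>I. P p q)" if "p \<in> I" for p
    using sum_mono2[OF fin NI] Pnn that by auto
  have rowNnn: "0 \<le> (\<Sum>q\<in>N. P p q)" if "p \<in> I" for p using Pnn that NI by (auto intro: sum_nonneg)
  have snn: "0 \<le> s p" if "p \<in> I" for p
  proof (cases "p \<in> N")
    case True
    then have "x p < 0" unfolding N_def by auto
    moreover have "(\<Sum>q\<in>N. P p q) \<le> 1" using rowN[of p] rows that NI by force
    ultimately have "x p * (\<Sum>q\<in>N. P p q) \<ge> x p * 1"
      by (intro mult_left_mono_neg) auto
    then show ?thesis using True unfolding s_def by simp
  next
    case False
    then have "x p \<ge> 0" using that unfolding N_def by auto
    then show ?thesis using False rowNnn[of p] that unfolding s_def by simp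
  qed
  have "(\<Sum>q\<in>N. x q) = (\<Sum>q\<in>N. (\<Sum>p\<in>I. x p * P p q) + b q)"
    using sol NI by (intro sum.cong) auto
  also have "\<dots> = (\<Sum>p\<in>I. x p * (\<Sum>q\<in>N. P p q)) + (\<Sum>q\<in>N. b q)"
    by (simp add: sum.distrib sum_distrib_left sum.swap[of _ N I])
  also have "(\<Sum>p\<in>I. x p * (\<Sum>q\<in>N. P p q)) = (\<Sum>p\<in>I. s p) + (\<Sum>p\<in>I. if p \<in> N then x p else 0)"
    unfolding s_def by (simp add: sum_subtractf)
  also have "(\<Sum>p\<in>I. if p \<in> N then x p else 0) = (\<Sum>q\<in>N. x q)"
    using fin NI by (simp add: sum.If_cases Int_absorb1)
  finally have z: "(\<Sum>p\<in>I. s p) + (\<Sum>q\<in>N. b q) = 0" by simp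
  have sI: "(\<Sum>p\<in>I. s p) = 0" and bN: "(\<Sum>q\<in>N. b q) = 0"
    using z snn bnn NI sum_nonneg[of I s] sum_nonneg[of N b] by (auto simp: subset_iff)
  have s0: "s p = 0" if "p \<in> I" for p
    using sum_nonneg_eq_0_iff[OF fin] sI snn that by blast
  have b0: "b q = 0" if "q \<in> N" for q
    using sum_nonneg_eq_0_iff[OF finN] bN bnn NI that by blast
  have rowone: "(\<Sum>q\<in>N. P p q) = 1" if "p \<in> N" for p
  proof -
    have "x p * (\<Sum>q\<in>N. P p q) - x p = 0" using s0[of p] that NI unfolding s_def by auto
    then have "x p * ((\<Sum>q\<in>N. P p q) - 1) = 0" by (simp add: algebra_simps)
    moreover have "x p \<noteq> 0" using that unfolding N_def by auto
    ultimately show ?thesis by simp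
  qed
  have outzero: "P p q = 0" if "p \<in> N" "q \<in> I - N" for p q
  proof -
    have pI: "p \<in> I" "q \<in> I" using that NI by auto
    have nnq: "0 \<le> P p q" using Pnn pI by blast
    have "(\<Sum>q\<in>I. P p q) = (\<Sum>q\<in>N. P p q) + (\<Sum>q\<in>I - N. P p q)"
      using sum.subset_diff[OF NI fin] by (simp add: add.commute)
    moreover have "(\<Sum>q\<in>I. P p q) \<le> 1" using rows pI by blast
    moreover have "(\<Sum>q\<in>N. P p q) = 1" using rowone[OF that(1)] .
    moreover have "P p q \<le> (\<Sum>q\<in>I - N. P p q)"
      by (rule member_le_sum) (use Pnn fin that pI in auto)
    ultimately show ?thesis using nnq by linarith
  qed
  have inzero: "x p * P p q = 0" if "p \<in> I - N" "q \<in> N" for p q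
  proof -
    have pI: "p \<in> I" "q \<in> I" using that NI by auto
    have nnq: "0 \<le> P p q" using Pnn pI by blast
    have xp: "x p \<ge> 0" using that unfolding N_def by auto
    have "x p * (\<Sum>q\<in>N. P p q) = 0" using s0[of p] that unfolding s_def by auto
    moreover have "P p q \<le> (\<Sum>q\<in>N. P p q)"
      by (rule member_le_sum) (use Pnn finN that pI NI in auto)
    then have "x p * P p q \<le> x p * (\<Sum>q\<in>N. P p q)"
      using xp by (rule mult_left_mono)
    moreover have "0 \<le> x p * P p q" using xp nnq by simp
    ultimately show ?thesis by linarith
  qed
  define z where "z q = (if q \<in> N then x q else 0)" for q
  have zsol: "(\<Sum>p\<in>I. z p * P p q) = z q" if "q \<in> I" for q
  proof -
    have "(\<Sum>p\<in>I. z p * P p q) = (\<Sum>p\<in>N. z p * P p q)"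
      by (rule sum.mono_neutral_right[OF fin NI]) (auto simp: z_def)
    also have "\<dots> = (\<Sum>p\<in>N. x p * P p q)" by (rule sum.cong) (auto simp: z_def)
    also have "\<dots> = z q"
    proof (cases "q \<in> N")
      case True
      have "x q = (\<Sum>p\<in>I. x p * P p q)" using sol that b0[OF True] by simp
      also have "\<dots> = (\<Sum>p\<in>N. x p * P p q) + (\<Sum>p\<in>I - N. x p * P p q)"
        using sum.subset_diff[OF NI fin] by (simp add: add.commute)
      also have "(\<Sum>p\<in>I - N. x p * P p q) = 0" using inzero True by (intro sum.neutral) auto
      finally show ?thesis using True unfolding z_def by simp
    next
      case False
      then show ?thesis using outzero that unfolding z_def by (auto intro!: sum.neutral)
    qed
    finally show ?thesis .
  qed
  have "\<forall>q\<in>I. (x q + z q) = (\<Sum>p\<in>I. (x p + z p) * P p q) + b q"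
    using sol zsol by (simp add: distrib_right sum.distrib)
  then have "\<forall>q\<in>I. x q + z q = x q" using uniq[rule_format, of "\<lambda>q. x q + z q"] by blast
  then have "z q0 = 0" using q0 NI by auto
  then show False using q0 unfolding z_def N_def by auto
qed


lemma telesc:
  fixes P :: "'i \<Rightarrow> 'i \<Rightarrow> real"
  assumes fin: "finite I"
    and sol: "\<forall>q\<in>I. x q = (\<Sum>p\<in>I. x p * P p q) + b q"
    and rowc: "\<forall>p\<in>I. \<delta> p * ((\<Sum>q\<in>I. P p q) - 1) = 0"
  shows "(\<Sum>p\<in>I. x p * (\<Sum>q\<in>I. P p q * (\<delta> q - \<delta> p))) = - (\<Sum>q\<in>I. b q * \<delta> q)"
proof -
  have "(\<Sum>p\<in>I. x p * (\<Sum>q\<in>I. P p q * (\<delta> q - \<delta> p)))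
      = (\<Sum>p\<in>I. \<Sum>q\<in>I. x p * P p q * \<delta> q) - (\<Sum>p\<in>I. x p * (\<delta> p * (\<Sum>q\<in>I. P p q)))"
    by (simp add: sum_distrib_left sum_subtractf algebra_simps)
  also have "(\<Sum>p\<in>I. \<Sum>q\<in>I. x p * P p q * \<delta> q) = (\<Sum>q\<in>I. \<delta> q * (\<Sum>p\<in>I. x p * P p q))"
    by (subst sum.swap) (simp add: sum_distrib_left algebra_simps)
  also have "\<dots> = (\<Sum>q\<in>I. \<delta> q * (x q - b q))" using sol by (intro sum.cong) auto
  also have "(\<Sum>p\<in>I. x p * (\<delta> p * (\<Sum>q\<in>I. P p q))) = (\<Sum>p\<in>I. x p * \<delta> p)"
  proof (rule sum.cong)
    fix p assume "p \<in> I"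
    then have "\<delta> p * (\<Sum>q\<in>I. P p q) = \<delta> p" using rowc by (auto simp: algebra_simps)
    then show "x p * (\<delta> p * (\<Sum>q\<in>I. P p q)) = x p * \<delta> p" by simp
  qed simp
  finally show ?thesis by (simp add: algebra_simps sum_subtractf)
qed

lemma sum_option:
  fixes f :: "'v::finite option \<Rightarrow> 'b::comm_monoid_add"
  shows "(\<Sum>j\<in>UNIV. f j) = f None + (\<Sum>j\<in>UNIV. f (Some j))"
proof -
  have "(\<Sum>j\<in>UNIV. f j) = (\<Sum>j\<in>insert None (range Some). f j)" by (simp add: UNIV_option_conv)
  also have "\<dots> = f None + (\<Sum>j\<in>range Some. f j)" by (subst sum.insert) auto
  also have "(\<Sum>j\<in>range Some. f j) = (\<Sum>j\<in>UNIV. f (Some j))"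
    by (subst sum.reindex) (auto simp: inj_on_def)
  finally show ?thesis .
qed

definition Iset :: "('a::finite \<Rightarrow> nat) \<Rightarrow> ('a \<times> nat \<times> 'v::finite) set" where
  "Iset nT = (SIGMA a:UNIV. SIGMA k:{..nT a}. UNIV)"

lemma finite_Iset: "finite (Iset nT)"
  unfolding Iset_def by (intro finite_SigmaI) auto

lemma mem_Iset[simp]: "(a, k, i) \<in> Iset nT \<longleftrightarrow> k \<le> nT a"
  unfolding Iset_def by auto

lemma sum_Iset: "(\<Sum>p\<in>Iset nT. f p) = (\<Sum>a\<in>UNIV. \<Sum>k\<le>nT a. \<Sum>i\<in>UNIV. f (a, k, i))"
  unfolding Iset_def by (simp add: sum.Sigma)

definition Pm :: "('a \<Rightarrow> nat \<Rightarrow> 'v \<Rightarrow> 'v option \<Rightarrow> real) \<Rightarrow> ('a \<times> nat \<times> 'v) \<Rightarrow> ('a \<times> nat \<times> 'v) \<Rightarrow> real" where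
  "Pm \<rho> p q = (case p of (a', k', j) \<Rightarrow> case q of (a, k, i) \<Rightarrow>
     (if a' = a \<and> k' = k then \<rho> a k j (Some i) else 0) +
     (if a' = a \<and> Suc k' = k \<and> j = i then \<rho> a k' j None else 0))"

lemma Pm_row: "Pm \<rho> (a', k', j) q =
   (if fst q = a' \<and> fst (snd q) = k' then \<rho> a' k' j (Some (snd (snd q))) else 0) +
   (if q = (a', Suc k', j) then \<rho> a' k' j None else 0)"
  by (cases q) (auto simp: Pm_def)

lemma Pm_col: "Pm \<rho> p (a, k, i) =
   (if fst p = a \<and> fst (snd p) = k then \<rho> a k (snd (snd p)) (Some i) else 0) +
   (if k \<noteq> 0 \<and> p = (a, k - 1, i) then \<rho> a (k - 1) i None else 0)"
  by (cases p) (auto simp: Pm_def)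

lemma sum_slice:
  fixes g :: "'a::finite \<times> nat \<times> 'v::finite \<Rightarrow> real"
  assumes "k \<le> nT a"
  shows "(\<Sum>q\<in>Iset nT. if fst q = a \<and> fst (snd q) = k then g q else 0) = (\<Sum>i\<in>UNIV. g (a, k, i))"
proof -
  have "(\<Sum>q\<in>Iset nT. if fst q = a \<and> fst (snd q) = k then g q else 0)
      = (\<Sum>q\<in>(\<lambda>i. (a, k, i)) ` UNIV. if fst q = a \<and> fst (snd q) = k then g q else 0)"
    using assms by (intro sum.mono_neutral_right[OF finite_Iset]) auto
  also have "\<dots> = (\<Sum>i\<in>UNIV. g (a, k, i))"
    by (subst sum.reindex) (auto simp: inj_on_def)
  finally show ?thesis .
qed

lemma row_expand:
  fixes h :: "'a::finite \<times> nat \<times> 'v::finite \<Rightarrow> real"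
  assumes k: "k \<le> nT a" and last: "\<rho> a (nT a) j None = 0"
  shows "(\<Sum>q\<in>Iset nT. Pm \<rho> (a, k, j) q * h q)
    = (\<Sum>i\<in>UNIV. \<rho> a k j (Some i) * h (a, k, i)) + \<rho> a k j None * h (a, Suc k, j)"
proof -
  have "(\<Sum>q\<in>Iset nT. Pm \<rho> (a, k, j) q * h q)
     = (\<Sum>q\<in>Iset nT. if fst q = a \<and> fst (snd q) = k then \<rho> a k j (Some (snd (snd q))) * h q else 0)
       + (\<Sum>q\<in>Iset nT. if q = (a, Suc k, j) then \<rho> a k j None * h q else 0)"
    unfolding Pm_row by (simp add: sum.distrib distrib_right if_distrib[of "\<lambda>v. v * _"] cong: if_cong)
  also have "(\<Sum>q\<in>Iset nT. if fst q = a \<and> fst (snd q) = k then \<rho> a k j (Some (snd (snd q))) * h q else 0)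
     = (\<Sum>i\<in>UNIV. \<rho> a k j (Some i) * h (a, k, i))"
    using sum_slice[where k=k and nT=nT and a=a and g="\<lambda>q. \<rho> a k j (Some (snd (snd q))) * h q", OF k] by simp
  also have "(\<Sum>q\<in>Iset nT. if q = (a, Suc k, j) then \<rho> a k j None * h q else 0)
     = \<rho> a k j None * h (a, Suc k, j)"
    using k last by (simp add: sum.delta[OF finite_Iset]) (metis le_antisym not_less_eq_eq mult_zero_left)
  finally show ?thesis .
qed

lemma col_expand:
  fixes x :: "'a::finite \<times> nat \<times> 'v::finite \<Rightarrow> real"
  assumes k: "k \<le> nT a"
  shows "(\<Sum>p\<in>Iset nT. x p * Pm \<rho> p (a, k, i))
    = (\<Sum>j\<in>UNIV. x (a, k, j) * \<rho> a k j (Some i)) + (if k = 0 then 0 else x (a, k - 1, i) * \<rho> a (k - 1) i None)"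
proof -
  have "(\<Sum>p\<in>Iset nT. x p * Pm \<rho> p (a, k, i))
     = (\<Sum>p\<in>Iset nT. if fst p = a \<and> fst (snd p) = k then x p * \<rho> a k (snd (snd p)) (Some i) else 0)
       + (\<Sum>p\<in>Iset nT. if p = (a, k - 1, i) then (if k = 0 then 0 else x p * \<rho> a (k - 1) i None) else 0)"
  proof -
    have "\<And>p. x p * Pm \<rho> p (a, k, i) = (if fst p = a \<and> fst (snd p) = k then x p * \<rho> a k (snd (snd p)) (Some i) else 0)
       + (if p = (a, k - 1, i) then (if k = 0 then 0 else x p * \<rho> a (k - 1) i None) else 0)"
      unfolding Pm_col by auto
    then show ?thesis by (simp add: sum.distrib)
  qed
  also have "(\<Sum>p\<in>Iset nT. if fst p = a \<and> fst (snd p) = k then x p * \<rho> a k (snd (snd p)) (Some i) else 0)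
     = (\<Sum>j\<in>UNIV. x (a, k, j) * \<rho> a k j (Some i))"
    using sum_slice[where k=k and nT=nT and a=a and g="\<lambda>p. x p * \<rho> a k (snd (snd p)) (Some i)", OF k] by simp
  also have "(\<Sum>p\<in>Iset nT. if p = (a, k - 1, i) then (if k = 0 then 0 else x p * \<rho> a (k - 1) i None) else 0)
     = (if k = 0 then 0 else x (a, k - 1, i) * \<rho> a (k - 1) i None)"
    using k by (simp add: sum.delta[OF finite_Iset])
  finally show ?thesis .
qed


lemma valid_sum_opt:
  fixes \<rho> :: "'a \<Rightarrow> nat \<Rightarrow> 'v::finite \<Rightarrow> 'v option \<Rightarrow> real"
  assumes "valid_phi E nT dest \<rho>" "k \<le> nT a"
  shows "\<rho> a k j None + (\<Sum>i\<in>UNIV. \<rho> a k j (Some i)) = (if k = nT a \<and> j = dest a then 0 else 1)"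
proof -
  have "(\<Sum>j'\<in>UNIV. \<rho> a k j j') = (if k = nT a \<and> j = dest a then 0 else 1)"
    using assms unfolding valid_phi_def by blast
  then show ?thesis using sum_option[of "\<rho> a k j"] by simp
qed

lemma rowsum:
  assumes v: "valid_phi E nT dest \<rho>" and k: "k \<le> nT a"
  shows "(\<Sum>q\<in>Iset nT. Pm \<rho> (a, k, j) q) = (if k = nT a \<and> j = dest a then 0 else 1)"
proof -
  have last: "\<rho> a (nT a) j None = 0" using v unfolding valid_phi_def by auto
  have "(\<Sum>q\<in>Iset nT. Pm \<rho> (a, k, j) q) = (\<Sum>q\<in>Iset nT. Pm \<rho> (a, k, j) q * 1)" by simp
  also have "\<dots> = (\<Sum>i\<in>UNIV. \<rho> a k j (Some i)) + \<rho> a k j None"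
    using row_expand[where h="\<lambda>_. 1" and nT=nT and a=a and k=k and \<rho>=\<rho> and j=j, OF k last] by simp
  finally show ?thesis using valid_sum_opt[OF v k, of j] by simp
qed

lemma traffic_sol:
  fixes u :: "'a::finite \<Rightarrow> nat \<Rightarrow> 'v::finite \<Rightarrow> real" and r :: "'v \<Rightarrow> 'a \<Rightarrow> real"
  assumes "is_traffic nT r \<rho> u"
  shows "\<forall>q\<in>Iset nT. (case q of (a, k, i) \<Rightarrow> u a k i) =
     (\<Sum>p\<in>Iset nT. (case p of (a, k, i) \<Rightarrow> u a k i) * Pm \<rho> p q) + (case q of (a, k, i) \<Rightarrow> if k = 0 then r i a else 0)"
proof
  fix q :: "'a \<times> nat \<times> 'v" assume q: "q \<in> Iset nT"
  obtain a k i where qe: "q = (a, k, i)" by (cases q) auto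
  have k: "k \<le> nT a" using q qe by simp
  show "(case q of (a, k, i) \<Rightarrow> u a k i) =
     (\<Sum>p\<in>Iset nT. (case p of (a, k, i) \<Rightarrow> u a k i) * Pm \<rho> p q) + (case q of (a, k, i) \<Rightarrow> if k = 0 then r i a else 0)"
  proof -
    have e: "u a k i = (\<Sum>j\<in>UNIV. u a k j * \<rho> a k j (Some i)) +
                  (if k = 0 then r i a else u a (k - 1) i * \<rho> a (k - 1) i None)"
      using assms k unfolding is_traffic_def by blast
    show ?thesis unfolding qe col_expand[where nT=nT and a=a and k=k, OF k]
      using e by (cases "k = 0") simp_all
  qed
qed

lemma sol_traffic:
  fixes y :: "'a::finite \<times> nat \<times> 'v::finite \<Rightarrow> real" and r :: "'v \<Rightarrow> 'a \<Rightarrow> real"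
  assumes "\<forall>q\<in>Iset nT. y q =
     (\<Sum>p\<in>Iset nT. y p * Pm \<rho> p q) + (case q of (a, k, i) \<Rightarrow> if k = 0 then r i a else 0)"
  shows "is_traffic nT r \<rho> (\<lambda>a k i. y (a, k, i))"
  unfolding is_traffic_def
proof (intro allI impI)
  fix a k i assume k: "k \<le> nT a"
  have "y (a, k, i) = (\<Sum>p\<in>Iset nT. y p * Pm \<rho> p (a, k, i)) + (if k = 0 then r i a else 0)"
  proof -
    have "(a, k, i) \<in> Iset nT" using k by simp
    from assms[rule_format, OF this] show ?thesis by simp
  qed
  then show "y (a, k, i) = (\<Sum>j\<in>UNIV. y (a, k, j) * \<rho> a k j (Some i)) +
          (if k = 0 then r i a else y (a, k - 1, i) * \<rho> a (k - 1) i None)"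
    unfolding col_expand[where nT=nT and a=a and k=k, OF k] by auto
qed

lemma traffic_is:
  assumes "traffic_unique nT r \<rho>"
  shows "is_traffic nT r \<rho> (traffic nT r \<rho>)"
  using assms unfolding traffic_unique_def traffic_def by (metis someI_ex)

lemma traffic_nonneg:
  fixes r :: "'v::finite \<Rightarrow> 'a::finite \<Rightarrow> real"
  assumes v: "valid_phi E nT dest \<rho>" and tu: "traffic_unique nT r \<rho>" and rnn: "\<forall>i a. r i a \<ge> 0"
  shows "\<forall>a k i. k \<le> nT a \<longrightarrow> traffic nT r \<rho> a k i \<ge> 0"
proof -
  define x where "x = (\<lambda>(a, k, i). traffic nT r \<rho> a k i)"
  define b where "b = (\<lambda>(a::'a, k::nat, i::'v). if k = 0 then r i a else 0)"
  have sol: "\<forall>q\<in>Iset nT. x q = (\<Sum>p\<in>Iset nT. x p * Pm \<rho> p q) + b q"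
    using traffic_sol[OF traffic_is[OF tu]] unfolding x_def b_def by blast
  have Pnn: "\<forall>p\<in>Iset nT. \<forall>q\<in>Iset nT. 0 \<le> Pm \<rho> p q"
  proof (intro ballI)
    fix p q :: "'a \<times> nat \<times> 'v" assume p: "p \<in> Iset nT" and q: "q \<in> Iset nT"
    obtain a' k' j where pe: "p = (a', k', j)" by (cases p) auto
    obtain a k i where qe: "q = (a, k, i)" by (cases q) auto
    have nn: "\<And>a k i j. k \<le> nT a \<Longrightarrow> 0 \<le> \<rho> a k i j" using v unfolding valid_phi_def by blast
    have "k' \<le> nT a'" "k \<le> nT a" using p q pe qe by auto
    then show "0 \<le> Pm \<rho> p q" unfolding pe qe Pm_def using nn by simp
  qed
  have rows: "\<forall>p\<in>Iset nT. (\<Sum>q\<in>Iset nT. Pm \<rho> p q) \<le> 1"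
  proof
    fix p :: "'a \<times> nat \<times> 'v" assume p: "p \<in> Iset nT"
    obtain a' k' j where pe: "p = (a', k', j)" by (cases p) auto
    show "(\<Sum>q\<in>Iset nT. Pm \<rho> p q) \<le> 1" using rowsum[OF v, of k' a' j] p pe by auto
  qed
  have bnn: "\<forall>q\<in>Iset nT. 0 \<le> b q" using rnn unfolding b_def by auto
  have uniq: "\<forall>y. (\<forall>q\<in>Iset nT. y q = (\<Sum>p\<in>Iset nT. y p * Pm \<rho> p q) + b q) \<longrightarrow> (\<forall>q\<in>Iset nT. y q = x q)"
  proof (intro allI impI ballI)
    fix y :: "'a \<times> nat \<times> 'v \<Rightarrow> real" and q :: "'a \<times> nat \<times> 'v" assume ys: "\<forall>q\<in>Iset nT. y q = (\<Sum>p\<in>Iset nT. y p * Pm \<rho> p q) + b q" and q: "q \<in> Iset nT"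
    have "is_traffic nT r \<rho> (\<lambda>a k i. y (a, k, i))"
      by (rule sol_traffic) (use ys in \<open>unfold b_def, blast\<close>)
    moreover have "is_traffic nT r \<rho> (traffic nT r \<rho>)" using traffic_is[OF tu] .
    ultimately have "\<forall>a k i. k \<le> nT a \<longrightarrow> y (a, k, i) = traffic nT r \<rho> a k i"
      using tu unfolding traffic_unique_def by blast
    then show "y q = x q" using q unfolding x_def by (cases q) auto
  qed
  have "\<forall>q\<in>Iset nT. 0 \<le> x q"
    by (rule nonneg_sol[OF finite_Iset Pnn rows bnn sol uniq])
  show ?thesis
  proof (intro allI impI)
    fix a k and i :: 'v assume "k \<le> nT a"
    then have "(a, k, i) \<in> Iset nT" by simp
    then show "0 \<le> traffic nT r \<rho> a k i" using \<open>\<forall>q\<in>Iset nT. 0 \<le> x q\<close> unfolding x_def by fastforce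
  qed
qed


lemma swap4:
  fixes f :: "'v::finite \<Rightarrow> 'w::finite \<Rightarrow> 'a::finite \<Rightarrow> nat \<Rightarrow> real"
  shows "(\<Sum>i\<in>UNIV. \<Sum>j\<in>UNIV. \<Sum>a\<in>UNIV. \<Sum>k\<le>nT a. f i j a k)
       = (\<Sum>a\<in>UNIV. \<Sum>k\<le>nT a. \<Sum>i\<in>UNIV. \<Sum>j\<in>UNIV. f i j a k)"
proof -
  define K where "K = (SIGMA a:(UNIV::'a set). {..nT a})"
  have finK: "finite K" unfolding K_def by (intro finite_SigmaI) auto
  have S: "\<And>g. (\<Sum>a\<in>UNIV. \<Sum>k\<le>nT a. g a k) = (\<Sum>(a,k)\<in>K. g a k)"
    unfolding K_def by (simp add: sum.Sigma)
  have "(\<Sum>i\<in>UNIV. \<Sum>j\<in>UNIV. \<Sum>a\<in>UNIV. \<Sum>k\<le>nT a. f i j a k)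
      = (\<Sum>i\<in>UNIV. \<Sum>j\<in>UNIV. \<Sum>(a,k)\<in>K. f i j a k)" by (simp add: S)
  also have "\<dots> = (\<Sum>i\<in>UNIV. \<Sum>(a,k)\<in>K. \<Sum>j\<in>UNIV. f i j a k)"
    by (intro sum.cong refl) (unfold split_def, rule sum.swap)
  also have "\<dots> = (\<Sum>(a,k)\<in>K. \<Sum>i\<in>UNIV. \<Sum>j\<in>UNIV. f i j a k)"
    by (unfold split_def, rule sum.swap)
  also have "\<dots> = (\<Sum>a\<in>UNIV. \<Sum>k\<le>nT a. \<Sum>i\<in>UNIV. \<Sum>j\<in>UNIV. f i j a k)" by (simp add: S)
  finally show ?thesis .
qed

lemma swap3:
  fixes f :: "'v::finite \<Rightarrow> 'a::finite \<Rightarrow> nat \<Rightarrow> real"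
  shows "(\<Sum>i\<in>UNIV. \<Sum>a\<in>UNIV. \<Sum>k\<le>nT a. f i a k)
       = (\<Sum>a\<in>UNIV. \<Sum>k\<le>nT a. \<Sum>i\<in>UNIV. f i a k)"
proof -
  define K where "K = (SIGMA a:(UNIV::'a set). {..nT a})"
  have S: "\<And>g. (\<Sum>a\<in>UNIV. \<Sum>k\<le>nT a. g a k) = (\<Sum>(a,k)\<in>K. g a k)"
    unfolding K_def by (simp add: sum.Sigma)
  have "(\<Sum>i\<in>UNIV. \<Sum>a\<in>UNIV. \<Sum>k\<le>nT a. f i a k) = (\<Sum>i\<in>UNIV. \<Sum>(a,k)\<in>K. f i a k)" by (simp add: S)
  also have "\<dots> = (\<Sum>(a,k)\<in>K. \<Sum>i\<in>UNIV. f i a k)" by (unfold split_def, rule sum.swap)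
  also have "\<dots> = (\<Sum>a\<in>UNIV. \<Sum>k\<le>nT a. \<Sum>i\<in>UNIV. f i a k)" by (simp add: S)
  finally show ?thesis .
qed

lemma lin_eq:
  fixes cE :: "'v::finite \<Rightarrow> 'v \<Rightarrow> real" and cC :: "'v \<Rightarrow> real" and u :: "'a::finite \<Rightarrow> nat \<Rightarrow> 'v \<Rightarrow> real"
  assumes v: "valid_phi E nT dest \<rho>"
  shows "(\<Sum>(i,j)\<in>E. cE i j * linkflow nT L \<rho> u i j) + (\<Sum>i\<in>UNIV. cC i * workload nT w \<rho> u i)
   = (\<Sum>(a,k,i)\<in>Iset nT. u a k i * ((\<Sum>j\<in>UNIV. \<rho> a k i (Some j) * (L a k * cE i j)) + \<rho> a k i None * (w i a k * cC i)))"
proof -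
  have off: "linkflow nT L \<rho> u i j = 0" if "(i, j) \<notin> E" for i j
    using v that unfolding valid_phi_def linkflow_def by (auto intro!: sum.neutral)
  have "(\<Sum>(i,j)\<in>E. cE i j * linkflow nT L \<rho> u i j) = (\<Sum>(i,j)\<in>UNIV. cE i j * linkflow nT L \<rho> u i j)"
    by (rule sum.mono_neutral_left) (auto simp: off)
  also have "\<dots> = (\<Sum>i\<in>UNIV. \<Sum>j\<in>UNIV. cE i j * linkflow nT L \<rho> u i j)"
    by (simp add: UNIV_Times_UNIV[symmetric] sum.cartesian_product del: UNIV_Times_UNIV)
  also have "\<dots> = (\<Sum>i\<in>UNIV. \<Sum>j\<in>UNIV. \<Sum>a\<in>UNIV. \<Sum>k\<le>nT a. u a k i * (\<rho> a k i (Some j) * (L a k * cE i j)))"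
    unfolding linkflow_def by (simp add: sum_distrib_left mult_ac)
  also have "\<dots> = (\<Sum>a\<in>UNIV. \<Sum>k\<le>nT a. \<Sum>i\<in>UNIV. \<Sum>j\<in>UNIV. u a k i * (\<rho> a k i (Some j) * (L a k * cE i j)))"
    by (rule swap4)
  finally have 1: "(\<Sum>(i,j)\<in>E. cE i j * linkflow nT L \<rho> u i j) = \<dots>" .
  have 2: "(\<Sum>i\<in>UNIV. cC i * workload nT w \<rho> u i)
     = (\<Sum>a\<in>UNIV. \<Sum>k\<le>nT a. \<Sum>i\<in>UNIV. u a k i * (\<rho> a k i None * (w i a k * cC i)))"
    unfolding workload_def by (simp add: sum_distrib_left mult_ac swap3[where f="\<lambda>i a k. _ i a k"])
  show ?thesis unfolding 1 2 sum_Iset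
    by (simp add: sum.distrib sum_distrib_left distrib_left)
qed


lemma dest_zero:
  fixes \<rho> :: "'a \<Rightarrow> nat \<Rightarrow> 'v::finite \<Rightarrow> 'v option \<Rightarrow> real"
  assumes v: "valid_phi E nT dest \<rho>"
  shows "\<rho> a (nT a) (dest a) j = 0"
proof -
  have "(\<Sum>j\<in>UNIV. \<rho> a (nT a) (dest a) j) = 0" using v unfolding valid_phi_def by auto
  moreover have "\<forall>j\<in>UNIV. 0 \<le> \<rho> a (nT a) (dest a) j" using v unfolding valid_phi_def by auto
  ultimately show ?thesis using sum_nonneg_eq_0_iff[of UNIV "\<rho> a (nT a) (dest a)"] by auto
qed

lemma Q_decomp:
  fixes cE :: "'v::finite \<Rightarrow> 'v \<Rightarrow> real" and cC :: "'v \<Rightarrow> real"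
    and u \<delta> :: "'a::finite \<Rightarrow> nat \<Rightarrow> 'v \<Rightarrow> real" and r :: "'v \<Rightarrow> 'a \<Rightarrow> real"
  assumes v: "valid_phi E nT dest \<rho>" and tr: "is_traffic nT r \<rho> u"
    and d0: "\<forall>a. \<delta> a (nT a) (dest a) = 0"
  shows "(\<Sum>(a,k,i)\<in>Iset nT. u a k i * ((\<Sum>j\<in>UNIV. \<rho> a k i (Some j) * (L a k * cE i j)) + \<rho> a k i None * (w i a k * cC i)))
   = (\<Sum>(a,k,i)\<in>Iset nT. u a k i * ((\<Sum>j\<in>UNIV. \<rho> a k i (Some j) * (L a k * cE i j + \<delta> a k j - \<delta> a k i))
          + \<rho> a k i None * (w i a k * cC i + \<delta> a (Suc k) i - \<delta> a k i)))
     + (\<Sum>(a,k,i)\<in>Iset nT. (if k = 0 then r i a else 0) * \<delta> a k i)"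
proof -
  define x where "x = (\<lambda>(a::'a, k::nat, i::'v). u a k i)"
  define d where "d = (\<lambda>(a::'a, k::nat, i::'v). \<delta> a k i)"
  define b where "b = (\<lambda>(a::'a, k::nat, i::'v). if k = 0 then r i a else 0)"
  have sol: "\<forall>q\<in>Iset nT. x q = (\<Sum>p\<in>Iset nT. x p * Pm \<rho> p q) + b q"
    using traffic_sol[OF tr] unfolding x_def b_def by blast
  have rowc: "\<forall>p\<in>Iset nT. d p * ((\<Sum>q\<in>Iset nT. Pm \<rho> p q) - 1) = 0"
  proof
    fix p :: "'a \<times> nat \<times> 'v" assume p: "p \<in> Iset nT"
    obtain a k i where pe: "p = (a, k, i)" by (cases p) auto
    show "d p * ((\<Sum>q\<in>Iset nT. Pm \<rho> p q) - 1) = 0"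
      using rowsum[OF v, of k a i] p pe d0 unfolding d_def by auto
  qed
  have tel: "(\<Sum>p\<in>Iset nT. x p * (\<Sum>q\<in>Iset nT. Pm \<rho> p q * (d q - d p))) = - (\<Sum>q\<in>Iset nT. b q * d q)"
    by (rule telesc[OF finite_Iset sol rowc])
  have last: "\<And>a j. \<rho> a (nT a) j None = 0" using v unfolding valid_phi_def by auto
  have rexp: "(\<Sum>q\<in>Iset nT. Pm \<rho> p q * (d q - d p)) =
      (case p of (a, k, i) \<Rightarrow> (\<Sum>j\<in>UNIV. \<rho> a k i (Some j) * (\<delta> a k j - \<delta> a k i))
          + \<rho> a k i None * (\<delta> a (Suc k) i - \<delta> a k i))" if p: "p \<in> Iset nT" for p
  proof -
    obtain a k i where pe: "p = (a, k, i)" by (cases p) auto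
    have k: "k \<le> nT a" using p pe by simp
    show ?thesis unfolding pe
      using row_expand[where h="\<lambda>q. d q - d (a, k, i)" and nT=nT and a=a and k=k and \<rho>=\<rho> and j=i, OF k last]
      by (simp add: d_def)
  qed
  have "(\<Sum>(a,k,i)\<in>Iset nT. u a k i * ((\<Sum>j\<in>UNIV. \<rho> a k i (Some j) * (L a k * cE i j + \<delta> a k j - \<delta> a k i))
          + \<rho> a k i None * (w i a k * cC i + \<delta> a (Suc k) i - \<delta> a k i)))
      = (\<Sum>(a,k,i)\<in>Iset nT. u a k i * ((\<Sum>j\<in>UNIV. \<rho> a k i (Some j) * (L a k * cE i j)) + \<rho> a k i None * (w i a k * cC i)))
        + (\<Sum>p\<in>Iset nT. x p * (\<Sum>q\<in>Iset nT. Pm \<rho> p q * (d q - d p)))"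
    unfolding sum.distrib[symmetric]
  proof (rule sum.cong[OF refl])
    fix p :: "'a \<times> nat \<times> 'v" assume p: "p \<in> Iset nT"
    obtain a k i where pe: "p = (a, k, i)" by (cases p) auto
    show "(case p of (a,k,i) \<Rightarrow> u a k i * ((\<Sum>j\<in>UNIV. \<rho> a k i (Some j) * (L a k * cE i j + \<delta> a k j - \<delta> a k i))
          + \<rho> a k i None * (w i a k * cC i + \<delta> a (Suc k) i - \<delta> a k i)))
      = (case p of (a,k,i) \<Rightarrow> u a k i * ((\<Sum>j\<in>UNIV. \<rho> a k i (Some j) * (L a k * cE i j)) + \<rho> a k i None * (w i a k * cC i)))
        + x p * (\<Sum>q\<in>Iset nT. Pm \<rho> p q * (d q - d p))"
      unfolding rexp[OF p] unfolding pe x_def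
      by (simp add: algebra_simps sum.distrib sum_subtractf)
  qed
  also have "(\<Sum>q\<in>Iset nT. b q * d q) = (\<Sum>(a,k,i)\<in>Iset nT. (if k = 0 then r i a else 0) * \<delta> a k i)"
    unfolding b_def d_def by (intro sum.cong) auto
  ultimately show ?thesis using tel by simp
qed

theorem proposition2:
  fixes E :: "('v::finite \<times> 'v) set"
    and nT :: "'a::finite \<Rightarrow> nat"
    and dest :: "'a \<Rightarrow> 'v"
    and L :: "'a \<Rightarrow> nat \<Rightarrow> real"
    and w :: "'v \<Rightarrow> 'a \<Rightarrow> nat \<Rightarrow> real"
    and r :: "'v \<Rightarrow> 'a \<Rightarrow> real"
    and D D' :: "'v \<Rightarrow> 'v \<Rightarrow> real \<Rightarrow> real"
    and Ddom :: "'v \<Rightarrow> 'v \<Rightarrow> real set"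
    and C C' :: "'v \<Rightarrow> real \<Rightarrow> real"
    and Cdom :: "'v \<Rightarrow> real set"
    and phi :: "'a \<Rightarrow> nat \<Rightarrow> 'v \<Rightarrow> 'v option \<Rightarrow> real"
    and delta :: "'a \<Rightarrow> nat \<Rightarrow> 'v \<Rightarrow> real"
  assumes strongly_connected: "\<forall>i j. (i, j) \<in> E\<^sup>*"
    and bidirectional: "\<forall>i j. (i, j) \<in> E \<longrightarrow> (j, i) \<in> E"
    and L_pos: "\<forall>a k. k \<le> nT a \<longrightarrow> L a k > 0"
    and w_pos: "\<forall>i a k. k \<le> nT a \<longrightarrow> w i a k > 0"
    and r_nonneg: "\<forall>i a. r i a \<ge> 0"
    and D_cost: "\<forall>(i, j)\<in>E. cost_fun (Ddom i j) (D i j) (D' i j)"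
    and C_cost: "\<forall>i. cost_fun (Cdom i) (C i) (C' i)"
    and phi_feasible: "feasible E nT dest L w Ddom Cdom r phi"
    and t_pos: "\<forall>a k i. k \<le> nT a \<longrightarrow> traffic nT r phi a k i > 0"
    and delta_marginal:
      "is_marginal nT dest L w D' C' phi (traffic nT r phi) delta"
    and optimality_cond:
      "\<forall>a k i j. k \<le> nT a \<longrightarrow>
         (let dT = dT_dphi E nT L w D' C' phi (traffic nT r phi) delta a k i;
              m = Min (range dT)
          in (phi a k i j > 0 \<longrightarrow> dT j = m) \<and> (phi a k i j = 0 \<longrightarrow> dT j \<ge> m))"
  shows "\<forall>psi. feasible E nT dest L w Ddom Cdom r psi \<longrightarrow>
           total_cost E nT L w D C r phi \<le> total_cost E nT L w D C r psi"
proof (intro allI impI)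
  fix psi assume fpsi: "feasible E nT dest L w Ddom Cdom r psi"
  define t where "t = traffic nT r phi"
  define s where "s = traffic nT r psi"
  define F where "F = linkflow nT L phi t"
  define F' where "F' = linkflow nT L psi s"
  define G where "G = workload nT w phi t"
  define G' where "G' = workload nT w psi s"
  define cE where "cE i j = D' i j (F i j)" for i j
  define cC where "cC i = C' i (G i)" for i
  have vphi: "valid_phi E nT dest phi" and tuphi: "traffic_unique nT r phi"
    and Fdom: "\<forall>(i,j)\<in>E. F i j \<in> Ddom i j" and Gdom: "\<forall>i. G i \<in> Cdom i"
    using phi_feasible unfolding feasible_def F_def G_def t_def by auto
  have vpsi: "valid_phi E nT dest psi" and tupsi: "traffic_unique nT r psi"
    and F'dom: "\<forall>(i,j)\<in>E. F' i j \<in> Ddom i j" and G'dom: "\<forall>i. G' i \<in> Cdom i"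
    using fpsi unfolding feasible_def F'_def G'_def s_def by auto
  have trphi: "is_traffic nT r phi t" using traffic_is[OF tuphi] unfolding t_def .
  have trpsi: "is_traffic nT r psi s" using traffic_is[OF tupsi] unfolding s_def .
  have snn: "\<forall>a k i. k \<le> nT a \<longrightarrow> s a k i \<ge> 0"
    using traffic_nonneg[OF vpsi tupsi r_nonneg] unfolding s_def .
  have d0: "\<forall>a. delta a (nT a) (dest a) = 0" using delta_marginal unfolding is_marginal_def by simp
  have marg: "delta a k i = phi a k i None * (w i a k * cC i + delta a (Suc k) i)
      + (\<Sum>j\<in>UNIV. phi a k i (Some j) * (L a k * cE i j + delta a k j))"
    if k: "k \<le> nT a" and nd: "\<not> (k = nT a \<and> i = dest a)" for a k i
  proof (cases "k < nT a")
    case True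
    then show ?thesis using delta_marginal unfolding is_marginal_def cE_def cC_def F_def G_def t_def
      by simp
  next
    case False
    then have kn: "k = nT a" using k by simp
    then have "i \<noteq> dest a" using nd by simp
    then have "delta a (nT a) i = (\<Sum>j\<in>UNIV. phi a (nT a) i (Some j) *
             (L a (nT a) * D' i j (linkflow nT L phi t i j) + delta a (nT a) j))"
      using delta_marginal unfolding is_marginal_def t_def by blast
    moreover have "phi a (nT a) i None = 0" using vphi unfolding valid_phi_def by blast
    ultimately show ?thesis using kn by (simp add: cE_def F_def)
  qed
  have opt: "(\<forall>j. (i,j)\<in>E \<longrightarrow> delta a k i \<le> L a k * cE i j + delta a k j) \<and>
      (k < nT a \<longrightarrow> delta a k i \<le> w i a k * cC i + delta a (Suc k) i)"
    if k: "k \<le> nT a" and nd: "\<not> (k = nT a \<and> i = dest a)" for a k i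
  proof -
    define dT where "dT = dT_dphi E nT L w D' C' phi t delta a k i"
    define m where "m = Min (range dT)"
    have cond: "(phi a k i j > 0 \<longrightarrow> dT j = m) \<and> (phi a k i j = 0 \<longrightarrow> dT j \<ge> m)" for j
      using optimality_cond k unfolding dT_def m_def t_def Let_def by blast
    have mle: "m \<le> dT j" for j unfolding m_def by (rule Min_le) auto
    define val where "val j = (case j of None \<Rightarrow> w i a k * cC i + delta a (Suc k) i
        | Some j' \<Rightarrow> L a k * cE i j' + delta a k j')" for j
    have dTS: "dT (Some j) = ereal (t a k i * val (Some j))" if "(i, j) \<in> E" for j
      using that unfolding dT_def dT_dphi_def val_def cE_def F_def by simp
    have dTN: "dT None = ereal (t a k i * val None)" if "k < nT a"
      using that unfolding dT_def dT_dphi_def val_def cC_def G_def by simp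
    have dTv: "dT j = ereal (t a k i * val j)" if "phi a k i j \<noteq> 0" for j
    proof (cases j)
      case None
      have "phi a (nT a) i None = 0" using vphi unfolding valid_phi_def by blast
      then have "k < nT a" using that k None by (metis le_neq_implies_less)
      then show ?thesis using None dTN by simp
    next
      case (Some j')
      then have "(i,j') \<in> E" using that k vphi unfolding valid_phi_def by blast
      then show ?thesis using Some dTS by simp
    qed
    have nn: "0 \<le> phi a k i j" for j using vphi k unfolding valid_phi_def by blast
    have sum1: "(\<Sum>j\<in>UNIV. phi a k i j) = 1" using vphi k nd unfolding valid_phi_def by auto
    have "\<exists>j. phi a k i j \<noteq> 0"
    proof (rule ccontr)
      assume "\<not> (\<exists>j. phi a k i j \<noteq> 0)"
      then have "(\<Sum>j\<in>UNIV. phi a k i j) = 0" by simp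
      then show False using sum1 by simp
    qed
    then obtain j0 where j0: "phi a k i j0 > 0" using nn by (metis less_eq_real_def)
    define M where "M = t a k i * val j0"
    have mM: "m = ereal M" using cond[of j0] j0 dTv[of j0] unfolding M_def by auto
    have tpos: "t a k i > 0" using t_pos k unfolding t_def by simp
    have valeq: "val j = M / t a k i" if "phi a k i j \<noteq> 0" for j
    proof -
      have "phi a k i j > 0" using nn[of j] that by simp
      then have "dT j = m" using cond by blast
      then have "t a k i * val j = M" using dTv[OF that] mM by simp
      then show ?thesis using tpos by (simp add: field_simps)
    qed
    have "delta a k i = (\<Sum>j\<in>UNIV. phi a k i j * val j)"
      unfolding marg[OF k nd] by (simp add: sum_option val_def)
    also have "\<dots> = (\<Sum>j\<in>UNIV. phi a k i j * (M / t a k i))"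
    proof (rule sum.cong[OF refl])
      fix j show "phi a k i j * val j = phi a k i j * (M / t a k i)"
        by (cases "phi a k i j = 0") (auto simp: valeq)
    qed
    also have "\<dots> = M / t a k i" using sum1 by (simp add: sum_distrib_right[symmetric] del: times_divide_eq_right)
    finally have dM: "delta a k i = M / t a k i" .
    have ge: "M / t a k i \<le> val j" if "dT j = ereal (t a k i * val j)" for j
    proof -
      have "M \<le> t a k i * val j" using mle[of j] mM that by simp
      then show ?thesis using tpos by (simp add: field_simps)
    qed
    show ?thesis
    proof (intro conjI allI impI)
      fix j assume "(i,j)\<in>E"
      then show "delta a k i \<le> L a k * cE i j + delta a k j"
        using ge[OF dTS] dM unfolding val_def by simp
    next
      assume "k < nT a"
      then show "delta a k i \<le> w i a k * cC i + delta a (Suc k) i"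
        using ge[OF dTN] dM unfolding val_def by simp
    qed
  qed
  show "total_cost E nT L w D C r phi \<le> total_cost E nT L w D C r psi"
  proof -
    define R where "R \<rho> a k i = (\<Sum>j\<in>UNIV. \<rho> a k i (Some j) * (L a k * cE i j + delta a k j - delta a k i))
          + \<rho> a k i None * (w i a k * cC i + delta a (Suc k) i - delta a k i)" for \<rho> a k i
    have Ralg: "R \<rho> a k i = (\<rho> a k i None * (w i a k * cC i + delta a (Suc k) i)
        + (\<Sum>j\<in>UNIV. \<rho> a k i (Some j) * (L a k * cE i j + delta a k j)))
        - delta a k i * (\<rho> a k i None + (\<Sum>j\<in>UNIV. \<rho> a k i (Some j)))" for \<rho> a k i
      unfolding R_def by (simp add: algebra_simps sum_subtractf sum_distrib_left sum.distrib)
    have Rphi: "R phi a k i = 0" if k: "k \<le> nT a" for a k i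
    proof (cases "k = nT a \<and> i = dest a")
      case True
      then show ?thesis using dest_zero[OF vphi] unfolding R_def by simp
    next
      case False
      show ?thesis unfolding Ralg marg[OF k False, symmetric]
        using valid_sum_opt[OF vphi k, of i] False by simp
    qed
    have Rpsi: "R psi a k i \<ge> 0" if k: "k \<le> nT a" for a k i
    proof (cases "k = nT a \<and> i = dest a")
      case True
      then show ?thesis using dest_zero[OF vpsi] unfolding R_def by simp
    next
      case False
      have nn: "0 \<le> psi a k i j" for j using vpsi k unfolding valid_phi_def by blast
      have A: "0 \<le> (\<Sum>j\<in>UNIV. psi a k i (Some j) * (L a k * cE i j + delta a k j - delta a k i))"
      proof (rule sum_nonneg)
        fix j
        show "0 \<le> psi a k i (Some j) * (L a k * cE i j + delta a k j - delta a k i)"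
        proof (cases "(i, j) \<in> E")
          case True
          then show ?thesis using opt[OF k False] nn[of "Some j"] by simp
        next
          case False
          then have "psi a k i (Some j) = 0" using vpsi k unfolding valid_phi_def by blast
          then show ?thesis by simp
        qed
      qed
      have B: "0 \<le> psi a k i None * (w i a k * cC i + delta a (Suc k) i - delta a k i)"
      proof (cases "k < nT a")
        case True
        then show ?thesis using opt[OF k False] nn[of None] by simp
      next
        case nlt: False
        then have "k = nT a" using k by simp
        then have "psi a k i None = 0" using vpsi unfolding valid_phi_def by blast
        then show ?thesis by simp
      qed
      show ?thesis unfolding R_def using A B by simp
    qed
    define Bt where "Bt = (\<Sum>(a,k,i)\<in>Iset nT. (if k = 0 then r i a else 0) * delta a k i)"
    have linphi: "(\<Sum>(i,j)\<in>E. cE i j * F i j) + (\<Sum>i\<in>UNIV. cC i * G i)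
        = (\<Sum>(a,k,i)\<in>Iset nT. t a k i * R phi a k i) + Bt"
      unfolding F_def G_def lin_eq[OF vphi] R_def Bt_def by (rule Q_decomp[where \<delta>=delta and nT=nT and dest=dest and \<rho>=phi and r=r and E=E, OF vphi trphi d0])
    have linpsi: "(\<Sum>(i,j)\<in>E. cE i j * F' i j) + (\<Sum>i\<in>UNIV. cC i * G' i)
        = (\<Sum>(a,k,i)\<in>Iset nT. s a k i * R psi a k i) + Bt"
      unfolding F'_def G'_def lin_eq[OF vpsi] R_def Bt_def by (rule Q_decomp[where \<delta>=delta and nT=nT and dest=dest and \<rho>=psi and r=r and E=E, OF vpsi trpsi d0])
    have Q0: "(\<Sum>(a,k,i)\<in>Iset nT. t a k i * R phi a k i) = 0"
      by (rule sum.neutral) (auto simp: Rphi)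
    have Qnn: "(\<Sum>(a,k,i)\<in>Iset nT. s a k i * R psi a k i) \<ge> 0"
      by (rule sum_nonneg) (auto simp: Rpsi snn)
    have convE: "D i j (F' i j) \<ge> D i j (F i j) + cE i j * (F' i j - F i j)" if "(i,j)\<in>E" for i j
    proof -
      have cf: "cost_fun (Ddom i j) (D i j) (D' i j)" using D_cost that by auto
      show ?thesis unfolding cE_def
        by (rule tangent_dc[where S="Ddom i j"]) (use cf Fdom F'dom that in \<open>auto simp: cost_fun_def\<close>)
    qed
    have convC: "C i (G' i) \<ge> C i (G i) + cC i * (G' i - G i)" for i
    proof -
      have cf: "cost_fun (Cdom i) (C i) (C' i)" using C_cost by auto
      show ?thesis unfolding cC_def
        by (rule tangent_dc[where S="Cdom i"]) (use cf Gdom G'dom in \<open>auto simp: cost_fun_def\<close>)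
    qed
    have tcphi: "total_cost E nT L w D C r phi = (\<Sum>(i,j)\<in>E. D i j (F i j)) + (\<Sum>i\<in>UNIV. C i (G i))"
      unfolding total_cost_def F_def G_def t_def by simp
    have tcpsi: "total_cost E nT L w D C r psi = (\<Sum>(i,j)\<in>E. D i j (F' i j)) + (\<Sum>i\<in>UNIV. C i (G' i))"
      unfolding total_cost_def F'_def G'_def s_def by simp
    have sE: "(\<Sum>(i,j)\<in>E. D i j (F' i j)) \<ge> (\<Sum>(i,j)\<in>E. D i j (F i j)) + ((\<Sum>(i,j)\<in>E. cE i j * F' i j) - (\<Sum>(i,j)\<in>E. cE i j * F i j))"
    proof -
      have "(\<Sum>(i,j)\<in>E. D i j (F' i j)) \<ge> (\<Sum>(i,j)\<in>E. D i j (F i j) + (cE i j * F' i j - cE i j * F i j))"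
        using convE by (intro sum_mono) (auto simp: right_diff_distrib)
      then show ?thesis by (simp add: split_def sum.distrib sum_subtractf)
    qed
    have sC: "(\<Sum>i\<in>UNIV. C i (G' i)) \<ge> (\<Sum>i\<in>UNIV. C i (G i)) + ((\<Sum>i\<in>UNIV. cC i * G' i) - (\<Sum>i\<in>UNIV. cC i * G i))"
    proof -
      have "(\<Sum>i\<in>UNIV. C i (G' i)) \<ge> (\<Sum>i\<in>UNIV. C i (G i) + (cC i * G' i - cC i * G i))"
        using convC by (intro sum_mono) (auto simp: right_diff_distrib)
      then show ?thesis by (simp add: sum.distrib sum_subtractf)
    qed
    show ?thesis unfolding tcphi tcpsi using sE sC linphi linpsi Q0 Qnn by linarith
  qed
qed
end
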